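(* There exist no binary orthogonal arrays of parameters $(n,M,\tau)=(10,112,4)$ or $(11,112,4)$, i.e. of length $10$ or $11$, cardinality $112=7\cdot 2^4$ and strength $4$.
   Context: A binary orthogonal array of parameters $(n,M,\tau)$ is the multiset of rows of an $M\times n$ binary matrix such that every $M\times\tau$ submatrix contains each ordered $\tau$-tuple of $\{0,1\}^\tau$ exactly $M/2^\tau$ times as rows. *)

theory Defs
  imports Main "HOL-Library.Multiset"
begin

text \<open>A binary orthogonal array with parameters (n, M, tau): a multiset A of
  binary rows (bool lists of length n) of size M such that for every choice of
  tau distinct columns S and every pattern v on S, the number of rows agreeing
  with v on S equals M / 2^tau (stated multiplicatively to avoid division).\<close>
definition binary_OA :: "nat \<Rightarrow> nat \<Rightarrow> nat \<Rightarrow> bool list multiset \<Rightarrow> bool" where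
  "binary_OA n M \<tau> A \<longleftrightarrow>
     size A = M \<and>
     (\<forall>x \<in># A. length x = n) \<and>
     (\<forall>S v. S \<subseteq> {0..<n} \<longrightarrow> card S = \<tau> \<longrightarrow>
        size (filter_mset (\<lambda>x. \<forall>j\<in>S. x ! j = v j) A) * 2 ^ \<tau> = M)"

end

theory Submission
  imports Defs
begin

definition sg :: "bool list \<Rightarrow> nat \<Rightarrow> int" where
  "sg x j = (if x!j then -1 else 1)"
definition chi :: "bool list multiset \<Rightarrow> nat set \<Rightarrow> int" where
  "chi A T = (\<Sum>x\<in>#A. \<Prod>j\<in>T. sg x j)"
definition cnt :: "bool list multiset \<Rightarrow> nat set \<Rightarrow> nat" where
  "cnt A R = size (filter_mset (\<lambda>x. \<forall>j\<in>R. x!j) A)"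

lemma prod_pow_expand:
  fixes w :: "nat \<Rightarrow> int"
  assumes "finite S"
  shows "(\<Prod>j\<in>S. 1 + w j) = (\<Sum>R\<in>Pow S. \<Prod>j\<in>R. w j)"
  using prod_add[OF assms, of w "\<lambda>_. 1"] by (simp add: add.commute)

lemma L1:
  assumes "finite S"
  shows "(\<Prod>j\<in>S. sg x j) = (\<Sum>R\<in>Pow S. if (\<forall>j\<in>R. x!j) then (-2)^card R else 0)"
proof -
  have "(\<Prod>j\<in>S. sg x j) = (\<Prod>j\<in>S. 1 + (if x!j then -2 else 0))"
    by (rule prod.cong) (auto simp: sg_def)
  also have "\<dots> = (\<Sum>R\<in>Pow S. \<Prod>j\<in>R. (if x!j then -2 else 0))"
    by (rule prod_pow_expand[OF assms])
  also have "\<dots> = (\<Sum>R\<in>Pow S. if (\<forall>j\<in>R. x!j) then (-2)^card R else 0)"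
  proof (rule sum.cong)
    fix R assume R: "R \<in> Pow S"
    then have fR: "finite R" using assms finite_subset by auto
    show "(\<Prod>j\<in>R. (if x!j then -2 else 0::int)) = (if (\<forall>j\<in>R. x!j) then (-2)^card R else 0)"
    proof (cases "\<forall>j\<in>R. x!j")
      case True
      then have "(\<Prod>j\<in>R. (if x!j then -2 else 0::int)) = (\<Prod>j\<in>R. -2)"
        by (intro prod.cong) auto
      then show ?thesis using True by simp
    next
      case False
      then obtain j where "j \<in> R" "\<not> x!j" by auto
      then show ?thesis using fR False by (auto simp: prod_zero_iff)
    qed
  qed simp
  finally show ?thesis .
qed

lemma cnt_add: "cnt (add_mset x A) R = cnt A R + (if \<forall>j\<in>R. x!j then 1 else 0)"
  by (simp add: cnt_def)

lemma L2:
  assumes "finite S"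
  shows "chi A S = (\<Sum>R\<in>Pow S. (-2)^card R * int (cnt A R))"
proof (induction A)
  case empty
  then show ?case by (simp add: chi_def cnt_def)
next
  case (add x A)
  have "chi (add_mset x A) S = (\<Prod>j\<in>S. sg x j) + chi A S" by (simp add: chi_def)
  also have "\<dots> = (\<Sum>R\<in>Pow S. (if (\<forall>j\<in>R. x!j) then (-2)^card R else 0) + (-2)^card R * int (cnt A R))"
    using add L1[OF assms, of x] by (simp add: sum.distrib)
  also have "\<dots> = (\<Sum>R\<in>Pow S. (-2)^card R * int (cnt (add_mset x A) R))"
    by (rule sum.cong) (auto simp: cnt_add algebra_simps)
  finally show ?case .
qed

lemma sum_mset_swap_set:
  "(\<Sum>T\<in>F. \<Sum>x\<in>#A. g T x) = (\<Sum>x\<in>#A. \<Sum>T\<in>F. g T x)"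
  by (induction A) (simp_all add: sum.distrib)

lemma L4:
  assumes "finite S"
  shows "(\<Sum>R\<in>Pow S. f (card R)) = (\<Sum>j\<le>card S. of_nat (card S choose j) * f j)"
proof -
  have "(\<Sum>R\<in>Pow S. f (card R)) = (\<Sum>j\<in>{..card S}. \<Sum>R\<in>{R. R \<in> Pow S \<and> card R = j}. f (card R))"
    by (rule sum.group[symmetric]) (auto simp: assms card_mono)
  also have "\<dots> = (\<Sum>j\<le>card S. of_nat (card S choose j) * f j)"
  proof (rule sum.cong)
    fix j
    have "(\<Sum>R\<in>{R. R \<in> Pow S \<and> card R = j}. f (card R)) = (\<Sum>R\<in>{R. R \<subseteq> S \<and> card R = j}. f j)"
      by (rule sum.cong) auto
    also have "\<dots> = of_nat (card S choose j) * f j"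
      using n_subsets[OF assms, of j] by simp
    finally show "(\<Sum>R\<in>{R. R \<in> Pow S \<and> card R = j}. f (card R)) = of_nat (card S choose j) * f j" .
  qed simp
  finally show ?thesis .
qed


lemma L3:
  assumes oa: "binary_OA n M \<tau> A" and tn: "\<tau> \<le> n"
  shows "S \<subseteq> {0..<n} \<Longrightarrow> card S \<le> \<tau> \<Longrightarrow>
     size (filter_mset (\<lambda>x. \<forall>j\<in>S. x ! j = v j) A) * 2 ^ card S = M"
proof (induction "\<tau> - card S" arbitrary: S v)
  case 0
  then have "card S = \<tau>" by simp
  then show ?case using oa 0 unfolding binary_OA_def by blast
next
  case (Suc d)
  have fS: "finite S" using Suc.prems finite_subset by blast
  have "card S < card {0..<n}" using Suc tn by simp
  then obtain a where a: "a \<in> {0..<n}" "a \<notin> S"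
    by (metis Suc.prems(1) psubsetI subsetI psubset_card_mono finite_atLeastLessThan less_irrefl subset_antisym)
  then have ca: "card (insert a S) = card S + 1" using fS by simp
  let ?P = "\<lambda>x. \<forall>j\<in>S. x ! j = v j"
  have e1: "size (filter_mset (\<lambda>x. \<forall>j\<in>insert a S. x ! j = (v(a:=True)) j) A) * 2 ^ card (insert a S) = M"
    using Suc a ca by (intro Suc.hyps) auto
  have e2: "size (filter_mset (\<lambda>x. \<forall>j\<in>insert a S. x ! j = (v(a:=False)) j) A) * 2 ^ card (insert a S) = M"
    using Suc a ca by (intro Suc.hyps) auto
  have f1: "filter_mset (\<lambda>x. \<forall>j\<in>insert a S. x ! j = (v(a:=True)) j) A = filter_mset (\<lambda>x. ?P x \<and> x!a) A"
    using a by (intro filter_mset_cong) auto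
  have f2: "filter_mset (\<lambda>x. \<forall>j\<in>insert a S. x ! j = (v(a:=False)) j) A = filter_mset (\<lambda>x. ?P x \<and> \<not> x!a) A"
    using a by (intro filter_mset_cong) auto
  have "filter_mset ?P A = filter_mset (\<lambda>x. ?P x \<and> x!a) A + filter_mset (\<lambda>x. ?P x \<and> \<not> x!a) A"
    by (metis filter_filter_mset multiset_partition)
  then have "size (filter_mset ?P A) = size (filter_mset (\<lambda>x. ?P x \<and> x!a) A) + size (filter_mset (\<lambda>x. ?P x \<and> \<not> x!a) A)"
    by simp
  then show ?case using e1 e2 f1 f2 ca by (simp add: algebra_simps)
qed

lemma L6:
  fixes e :: "nat \<Rightarrow> int"
  assumes fI: "finite I" and e: "\<And>j. e j = 1 \<or> e j = -1"
  shows "0 \<le> (\<Sum>T\<in>Pow I. (int (card I) - 2 * int (card T)) * (\<Prod>j\<in>T. e j))"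
proof -
  have "(\<Sum>T\<in>Pow I. (int (card I) - 2 * int (card T)) * (\<Prod>j\<in>T. e j))
      = (\<Sum>T\<in>Pow I. \<Sum>a\<in>I. \<Prod>j\<in>T. (if j = a then - e j else e j))"
  proof (rule sum.cong)
    fix T assume T: "T \<in> Pow I"
    then have fT: "finite T" using fI finite_subset by auto
    have ci: "int (card I) - 2 * int (card T) = (\<Sum>a\<in>I. if a \<in> T then -1 else 1)"
    proof -
      have "(\<Sum>a\<in>I. if a \<in> T then -1 else (1::int)) = (\<Sum>a\<in>I \<inter> T. -1) + (\<Sum>a\<in>I - T. 1)"
        using fI by (simp add: sum.If_cases Diff_eq)
      also have "\<dots> = - int (card T) + int (card (I - T))"
        using T by (simp add: Int_absorb1)
      also have "card (I - T) = card I - card T" using T fT by (simp add: card_Diff_subset)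
      finally show ?thesis using T fI card_mono[OF fI, of T] by simp
    qed
    have "\<And>a. a \<in> I \<Longrightarrow> (\<Prod>j\<in>T. (if j = a then - e j else e j)) = (if a \<in> T then -1 else 1) * (\<Prod>j\<in>T. e j)"
    proof -
      fix a assume "a \<in> I"
      show "(\<Prod>j\<in>T. (if j = a then - e j else e j)) = (if a \<in> T then -1 else 1) * (\<Prod>j\<in>T. e j)"
      proof (cases "a \<in> T")
        case True
        then have "(\<Prod>j\<in>T. (if j = a then - e j else e j)) = (- e a) * (\<Prod>j\<in>T - {a}. e j)"
          using fT by (simp add: prod.remove)
        also have "\<dots> = - (\<Prod>j\<in>T. e j)" using True fT by (simp add: prod.remove)
        finally show ?thesis using True by simp
      next
        case False
        then show ?thesis by (auto intro: prod.cong)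
      qed
    qed
    then show "(int (card I) - 2 * int (card T)) * (\<Prod>j\<in>T. e j) = (\<Sum>a\<in>I. \<Prod>j\<in>T. (if j = a then - e j else e j))"
      unfolding ci by (simp add: sum_distrib_right)
  qed simp
  also have "\<dots> = (\<Sum>a\<in>I. \<Sum>T\<in>Pow I. \<Prod>j\<in>T. (if j = a then - e j else e j))"
    by (rule sum.swap)
  also have "\<dots> = (\<Sum>a\<in>I. \<Prod>j\<in>I. 1 + (if j = a then - e j else e j))"
    using prod_pow_expand[OF fI] by simp
  also have "0 \<le> \<dots>"
  proof (intro sum_nonneg prod_nonneg)
    fix a j show "0 \<le> 1 + (if j = a then - e j else e j)" using e[of j] by auto
  qed
  finally show ?thesis .
qed


lemma summ_nonneg: "(\<And>x. 0 \<le> f x) \<Longrightarrow> 0 \<le> (\<Sum>x\<in>#A. (f x::int))"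
  by (induction A) auto

lemma chi_sq: "chi A T ^ 2 = (\<Sum>x\<in>#A. \<Sum>y\<in>#A. \<Prod>j\<in>T. sg x j * sg y j)"
  by (simp add: chi_def power2_eq_square sum_mset_distrib_left sum_mset_distrib_right prod.distrib mult.commute)

lemma key:
  "0 \<le> (\<Sum>T\<in>Pow {0..<9::nat}. (9 - 2 * int (card T)) * chi A T ^ 2)"
proof -
  have "(\<Sum>T\<in>Pow {0..<9::nat}. (9 - 2 * int (card T)) * chi A T ^ 2)
     = (\<Sum>T\<in>Pow {0..<9::nat}. \<Sum>x\<in>#A. \<Sum>y\<in>#A. (9 - 2 * int (card T)) * (\<Prod>j\<in>T. sg x j * sg y j))"
    by (simp add: chi_sq sum_mset_distrib_left)
  also have "\<dots> = (\<Sum>x\<in>#A. \<Sum>T\<in>Pow {0..<9::nat}. \<Sum>y\<in>#A. (9 - 2 * int (card T)) * (\<Prod>j\<in>T. sg x j * sg y j))"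
    by (rule sum_mset_swap_set)
  also have "\<dots> = (\<Sum>x\<in>#A. \<Sum>y\<in>#A. \<Sum>T\<in>Pow {0..<9::nat}. (9 - 2 * int (card T)) * (\<Prod>j\<in>T. sg x j * sg y j))"
    by (simp add: sum_mset_swap_set)
  also have "0 \<le> \<dots>"
  proof (intro summ_nonneg)
    fix x y
    have "0 \<le> (\<Sum>T\<in>Pow {0..<9::nat}. (int (card {0..<9::nat}) - 2 * int (card T)) * (\<Prod>j\<in>T. sg x j * sg y j))"
      by (rule L6) (auto simp: sg_def)
    then show "0 \<le> (\<Sum>T\<in>Pow {0..<9::nat}. (9 - 2 * int (card T)) * (\<Prod>j\<in>T. sg x j * sg y j))" by simp
  qed
  finally show ?thesis .
qed


lemma cnt_val:
  assumes oa: "binary_OA n 112 4 A" and n: "4 \<le> n" and R: "R \<subseteq> {0..<n}" "card R \<le> 4"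
  shows "int (cnt A R) * 2^card R = 112"
proof -
  have "size (filter_mset (\<lambda>x. \<forall>j\<in>R. x ! j = True) A) * 2 ^ card R = 112"
    by (rule L3[OF oa n R])
  then have "cnt A R * 2 ^ card R = 112" by (simp add: cnt_def)
  then show ?thesis by (metis of_nat_mult of_nat_numeral of_nat_power)
qed

lemma term_small:
  assumes oa: "binary_OA n 112 4 A" and n: "4 \<le> n" and R: "R \<subseteq> {0..<n}" "card R \<le> 4"
  shows "(-2)^card R * int (cnt A R) = 112 * (-1)^card R"
proof -
  have "(-2::int)^card R = (-1)^card R * 2^card R" by (simp flip: power_mult_distrib)
  then show ?thesis using cnt_val[OF assms] by (simp add: algebra_simps)
qed

lemma chi_sum_pow:
  assumes oa: "binary_OA n 112 4 A" and n: "4 \<le> n" and S: "S \<subseteq> {0..<n}" "card S \<le> 4"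
  shows "chi A S = (\<Sum>j\<le>card S. of_nat (card S choose j) * (112 * (-1)^j))"
proof -
  have fS: "finite S" using S finite_subset by blast
  have "chi A S = (\<Sum>R\<in>Pow S. (-2)^card R * int (cnt A R))" by (rule L2[OF fS])
  also have "\<dots> = (\<Sum>R\<in>Pow S. 112 * (-1)^card R)"
  proof (rule sum.cong)
    fix R assume "R \<in> Pow S"
    then have "R \<subseteq> {0..<n}" "card R \<le> 4" using S card_mono[OF fS, of R] by auto
    then show "(-2)^card R * int (cnt A R) = 112 * (-1)^card R" by (rule term_small[OF oa n])
  qed simp
  also have "\<dots> = (\<Sum>j\<le>card S. of_nat (card S choose j) * (112 * (-1)^j))"
    by (rule L4[OF fS])
  finally show ?thesis .
qed

lemma C1:
  assumes oa: "binary_OA n 112 4 A" and n: "4 \<le> n" and S: "S \<subseteq> {0..<n}" "1 \<le> card S" "card S \<le> 4"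
  shows "chi A S = 0"
proof -
  have v: "(\<Sum>j\<le>1. of_nat (1 choose j) * (112 * (-1)^j)) = (0::int)"
          "(\<Sum>j\<le>2. of_nat (2 choose j) * (112 * (-1)^j)) = (0::int)"
          "(\<Sum>j\<le>3. of_nat (3 choose j) * (112 * (-1)^j)) = (0::int)"
          "(\<Sum>j\<le>4. of_nat (4 choose j) * (112 * (-1)^j)) = (0::int)"
    by code_simp+
  have "card S = 1 \<or> card S = 2 \<or> card S = 3 \<or> card S = 4" using S by auto
  then show ?thesis using chi_sum_pow[OF oa n S(1) S(3)] v by auto
qed

lemma odd16_sq:
  assumes "c = 16 + 32 * (q::int)"
  shows "256 \<le> c^2"
proof -
  have "1 \<le> \<bar>1 + 2*q\<bar>" by arith
  then have "1 * 1 \<le> \<bar>1 + 2*q\<bar> * \<bar>1 + 2*q\<bar>" by (intro mult_mono) auto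
  then have "1 \<le> (1 + 2*q)^2" by (simp add: power2_eq_square abs_mult_self_eq)
  moreover have "c^2 = 256 * (1 + 2*q)^2" using assms by (simp add: power2_eq_square algebra_simps)
  ultimately show ?thesis by simp
qed

lemma C2:
  assumes oa: "binary_OA n 112 4 A" and n: "4 \<le> n" and S: "S \<subseteq> {0..<n}" "5 \<le> card S" "card S \<le> 7"
  shows "256 \<le> chi A S ^ 2"
proof -
  have fS: "finite S" using S finite_subset by blast
  define d where "d r = (if r \<le> 4 then 112*(-1)^r else (0::int))" for r :: nat
  have "chi A S - (\<Sum>R\<in>Pow S. d (card R)) = (\<Sum>R\<in>Pow S. (-2)^card R * int (cnt A R) - d (card R))"
    by (simp add: L2[OF fS] sum_subtractf)
  also have "32 dvd \<dots>"
  proof (rule dvd_sum)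
    fix R assume R: "R \<in> Pow S"
    then have RS: "R \<subseteq> {0..<n}" using S by auto
    show "32 dvd (-2)^card R * int (cnt A R) - d (card R)"
    proof (cases "card R \<le> 4")
      case True
      then show ?thesis using term_small[OF oa n RS True] by (simp add: d_def)
    next
      case False
      then have m: "card R = (card R - 5) + 5" by simp
      have "(-2::int)^card R = (-2)^(card R - 5) * (-32)"
        by (subst m) (simp add: power_add)
      then show ?thesis using False by (simp add: d_def)
    qed
  qed
  finally obtain q where q: "chi A S - (\<Sum>R\<in>Pow S. d (card R)) = 32 * q" by (auto elim: dvdE)
  have sd: "(\<Sum>R\<in>Pow S. d (card R)) = (\<Sum>j\<le>card S. of_nat (card S choose j) * d j)"
    by (rule L4[OF fS])
  have v: "(\<Sum>j\<le>5. of_nat (5 choose j) * d j) = 16 + 32 * 3"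
          "(\<Sum>j\<le>6. of_nat (6 choose j) * d j) = 16 + 32 * 17"
          "(\<Sum>j\<le>7. of_nat (7 choose j) * d j) = 16 + 32 * 52"
    unfolding d_def by code_simp+
  have "card S = 5 \<or> card S = 6 \<or> card S = 7" using S by auto
  then have "\<exists>t. (\<Sum>R\<in>Pow S. d (card R)) = 16 + 32 * t"
  proof (elim disjE)
    assume "card S = 5" then show ?thesis using sd v(1) by (intro exI[of _ 3]) simp
  next
    assume "card S = 6" then show ?thesis using sd v(2) by (intro exI[of _ 17]) simp
  next
    assume "card S = 7" then show ?thesis using sd v(3) by (intro exI[of _ 52]) simp
  qed
  then obtain t where "(\<Sum>R\<in>Pow S. d (card R)) = 16 + 32 * t" by blast
  then have "chi A S = 16 + 32 * (q + t)" using q by (simp add: algebra_simps)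
  then show ?thesis by (rule odd16_sq)
qed

lemma chi_empty:
  assumes oa: "binary_OA n 112 4 A"
  shows "chi A {} = 112"
proof -
  have "chi A {} = int (size A)" unfolding chi_def by (induction A) auto
  then show ?thesis using oa by (simp add: binary_OA_def)
qed

lemma main_gen:
  assumes n: "9 \<le> n"
  shows "\<not> binary_OA n 112 4 A"
proof
  assume oa: "binary_OA n 112 4 A"
  have n4: "4 \<le> n" using n by simp
  define u where "u j = (if j = 0 then 112896 else if j = 5 then -256 else if j = 6 then -768
      else if j = 7 then -1280 else (0::int))" for j :: nat
  have "(\<Sum>T\<in>Pow {0..<9::nat}. (9 - 2 * int (card T)) * chi A T ^ 2) \<le> (\<Sum>T\<in>Pow {0..<9::nat}. u (card T))"
  proof (rule sum_mono)
    fix T assume T: "T \<in> Pow {0..<9::nat}"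
    then have Tn: "T \<subseteq> {0..<n}" using n by auto
    have fT: "finite T" using T finite_subset by blast
    have c9: "card T \<le> 9" using T card_mono[of "{0..<9::nat}" T] by auto
    have sq: "0 \<le> chi A T ^ 2" by simp
    consider "card T = 0" | "1 \<le> card T \<and> card T \<le> 4" | "card T = 5" | "card T = 6" | "card T = 7" | "8 \<le> card T"
      by linarith
    then show "(9 - 2 * int (card T)) * chi A T ^ 2 \<le> u (card T)"
    proof cases
      case 1
      then have "T = {}" using fT by simp
      then show ?thesis using chi_empty[OF oa] by (simp add: u_def)
    next
      case 2
      then show ?thesis using C1[OF oa n4 Tn] by (auto simp: u_def)
    next
      case 3
      then show ?thesis using C2[OF oa n4 Tn] by (simp add: u_def)
    next
      case 4
      then show ?thesis using C2[OF oa n4 Tn] by (simp add: u_def)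
    next
      case 5
      then show ?thesis using C2[OF oa n4 Tn] by (simp add: u_def)
    next
      case 6
      then have "(9 - 2 * int (card T)) \<le> 0" by simp
      then have "(9 - 2 * int (card T)) * chi A T ^ 2 \<le> 0" using sq by (simp add: mult_nonpos_nonneg)
      then show ?thesis using 6 by (simp add: u_def)
    qed
  qed
  also have "\<dots> = (\<Sum>j\<le>card {0..<9::nat}. of_nat (card {0..<9::nat} choose j) * u j)"
    by (rule L4) simp
  also have "\<dots> = (\<Sum>j\<le>9. of_nat (9 choose j) * u j)" by simp
  also have "\<dots> < 0" unfolding u_def by code_simp
  finally show False using key[of A] by simp
qed


theorem theorem4p3:
  shows "\<not> (\<exists>A. binary_OA 10 112 4 A) \<and> \<not> (\<exists>A. binary_OA 11 112 4 A)"
  using main_gen[of 10] main_gen[of 11] by auto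

end
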